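(* Let $T$ be a correlation-free parity decision tree on $\{-1,1\}^n$ of depth $d$. Then $\mathbf{E}_{\ell\in T}\big(\sum_{i=1}^n \ell_i\big)^2\le d$.
   Context: A parity decision tree on $\{-1,1\}^n$ is a rooted full binary tree whose internal nodes are labelled by subsets $S\subseteq[n]$, whose two outgoing edges are labelled $-1$ and $1$; an input $x$ follows from a node labelled $S$ the edge labelled $\prod_{i\in S}x_i$. Depth is the maximum number of internal nodes on a root-to-leaf path. A quantity (such as $x_i$ or $x_i\oplus x_j$) is fixed by the queries on a path if it is determined by the answers to the parities queried along that path. $T$ is (pairwise) correlation-free if for every $i\ne j\in[n]$ and every path in $T$, whenever $x_i\oplus x_j$ is fixed by the queries in the path, so are $x_i$ and $x_j$. Each leaf is represented as a vector $\ell\in\{-1,0,1\}^n$ with $\ell_i$ the expected value of $x_i$ over uniformly random inputs reaching that leaf; $\mathbf{E}_{\ell\in T}$ is the expectation over the leaf reached by a uniformly random input. *)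

theory Defs
  imports Complex_Main
begin

text \<open>Inputs: points of the cube, coordinates indexed by 0..n-1 (standing for 1..n),
  values in {-1,1}; coordinates outside the index range are set to 1.\<close>
definition cube :: "nat \<Rightarrow> (nat \<Rightarrow> int) set" where
  "cube n = {x. (\<forall>i<n. x i \<in> {-1, 1}) \<and> (\<forall>i\<ge>n. x i = 1)}"

definition chi :: "nat set \<Rightarrow> (nat \<Rightarrow> int) \<Rightarrow> int" where
  "chi S x = (\<Prod>i\<in>S. x i)"

text \<open>Parity decision tree: Node S tm tp queries parity S, follows tm on answer -1
  and tp on answer 1.\<close>
datatype ptree = Leaf | Node "nat set" ptree ptree

fun depth :: "ptree \<Rightarrow> nat" where
  "depth Leaf = 0"
| "depth (Node S l r) = Suc (max (depth l) (depth r))"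

fun labels_in :: "nat \<Rightarrow> ptree \<Rightarrow> bool" where
  "labels_in n Leaf = True"
| "labels_in n (Node S l r) = (S \<subseteq> {0..<n} \<and> labels_in n l \<and> labels_in n r)"

fun qpaths :: "ptree \<Rightarrow> nat set list set" where
  "qpaths Leaf = {[]}"
| "qpaths (Node S l r) = insert [] ((Cons S) ` (qpaths l \<union> qpaths r))"

definition fixed_by :: "nat \<Rightarrow> nat set list \<Rightarrow> ((nat \<Rightarrow> int) \<Rightarrow> int) \<Rightarrow> bool" where
  "fixed_by n Q f = (\<forall>x\<in>cube n. \<forall>y\<in>cube n.
      (\<forall>S\<in>set Q. chi S x = chi S y) \<longrightarrow> f x = f y)"

text \<open>x_i xor x_j corresponds to the product x_i * x_j in the +-1 notation.\<close>
definition correlation_free :: "nat \<Rightarrow> ptree \<Rightarrow> bool" where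
  "correlation_free n T = (\<forall>Q\<in>qpaths T. \<forall>i<n. \<forall>j<n. i \<noteq> j \<longrightarrow>
      fixed_by n Q (\<lambda>x. x i * x j) \<longrightarrow>
      (fixed_by n Q (\<lambda>x. x i) \<and> fixed_by n Q (\<lambda>x. x j)))"

fun same_leaf :: "ptree \<Rightarrow> (nat \<Rightarrow> int) \<Rightarrow> (nat \<Rightarrow> int) \<Rightarrow> bool" where
  "same_leaf Leaf x y = True"
| "same_leaf (Node S l r) x y = (chi S x = chi S y \<and>
      (if chi S x = -1 then same_leaf l x y else same_leaf r x y))"

definition leaf_vec :: "nat \<Rightarrow> ptree \<Rightarrow> (nat \<Rightarrow> int) \<Rightarrow> nat \<Rightarrow> real" where
  "leaf_vec n T x i = (let L = {y\<in>cube n. same_leaf T x y} in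
      (\<Sum>y\<in>L. real_of_int (y i)) / real (card L))"

end

theory Submission
  imports Defs "HOL-Library.FuncSet"
begin

lemma cube_vals: "x \<in> cube n \<Longrightarrow> x i \<in> {-1,1}"
  by (cases "i<n") (auto simp: cube_def)

lemma cube_sq: "x \<in> cube n \<Longrightarrow> x i * x i = 1"
  using cube_vals[of x n i] by auto

lemma chi_mult: "chi S (\<lambda>k. u k * v k) = chi S u * chi S v"
  by (simp add: chi_def prod.distrib)

lemma chi_sq: "x \<in> cube n \<Longrightarrow> chi S x * chi S x = 1"
proof -
  assume "x \<in> cube n"
  have "chi S x * chi S x = chi S (\<lambda>k. x k * x k)" by (simp add: chi_mult)
  also have "\<dots> = 1" using cube_sq[OF \<open>x \<in> cube n\<close>] by (simp add: chi_def)
  finally show ?thesis .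
qed

lemma chi_vals: "x \<in> cube n \<Longrightarrow> chi S x = 1 \<or> chi S x = -1"
  using chi_sq[of x n S] zmult_eq_1_iff by blast

lemma cube_mult: "u \<in> cube n \<Longrightarrow> v \<in> cube n \<Longrightarrow> (\<lambda>k. u k * v k) \<in> cube n"
proof -
  assume u: "u \<in> cube n" and v: "v \<in> cube n"
  have "\<And>i. u i * v i \<in> {-1,1}"
  proof -
    fix i
    show "u i * v i \<in> {-1,1}" using cube_vals[OF u, of i] cube_vals[OF v, of i] by auto
  qed
  then show ?thesis using u v by (auto simp: cube_def)
qed

lemma cube_eq: "cube n = (\<lambda>f i. if i<n then f i else 1) ` (PiE {..<n} (\<lambda>_. {-1,1::int}))"
proof
  show "cube n \<subseteq> (\<lambda>f i. if i<n then f i else 1) ` (PiE {..<n} (\<lambda>_. {-1,1::int}))"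
  proof
    fix x assume x: "x \<in> cube n"
    have "x = (\<lambda>i. if i<n then restrict x {..<n} i else 1)"
      using x by (auto simp: cube_def)
    moreover have "restrict x {..<n} \<in> PiE {..<n} (\<lambda>_. {-1,1::int})"
      using cube_vals[OF x] by auto
    ultimately show "x \<in> (\<lambda>f i. if i<n then f i else 1) ` (PiE {..<n} (\<lambda>_. {-1,1::int}))"
      by blast
  qed
  show "(\<lambda>f i. if i<n then f i else 1) ` (PiE {..<n} (\<lambda>_. {-1,1::int})) \<subseteq> cube n"
    by (auto simp: cube_def PiE_def Pi_def)
qed

lemma cube_card: "finite (cube n) \<and> card (cube n) = 2 ^ n"
proof -
  have inj: "inj_on (\<lambda>f i. if i<n then f i else (1::int)) (PiE {..<n} (\<lambda>_. {-1,1::int}))"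
  proof (rule inj_onI)
    fix f g assume f: "f \<in> PiE {..<n} (\<lambda>_. {-1,1::int})" and g: "g \<in> PiE {..<n} (\<lambda>_. {-1,1::int})"
      and e: "(\<lambda>i. if i<n then f i else 1) = (\<lambda>i. if i<n then g i else 1)"
    show "f = g"
    proof (rule PiE_ext[OF f g])
      fix i assume "i \<in> {..<n}" then show "f i = g i" using fun_cong[OF e, of i] by simp
    qed
  qed
  have c: "card (PiE {..<n} (\<lambda>_. {-1,1::int})) = 2 ^ n"
  proof -
    have "card {-1,1::int} = 2" by simp
    then show ?thesis by (simp only: card_PiE[OF finite_lessThan] prod_constant card_lessThan)
  qed
  show ?thesis unfolding cube_eq using card_image[OF inj] c by (auto simp: finite_PiE)
qed

definition region :: "nat \<Rightarrow> nat set list \<Rightarrow> (nat \<Rightarrow> int) \<Rightarrow> (nat \<Rightarrow> int) set" where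
  "region n Q x0 = {y\<in>cube n. \<forall>S\<in>set Q. chi S y = chi S x0}"

lemma finite_region: "finite (region n Q x0)"
  using cube_card[of n] by (auto simp: region_def)

lemma flip:
  assumes "\<not> fixed_by n Q (\<lambda>x. x i)"
  obtains u v where "u \<in> cube n" "v \<in> cube n" "\<forall>S\<in>set Q. chi S u = chi S v" "u i \<noteq> v i"
    "(\<lambda>k. u k * v k) \<in> cube n" "\<forall>S\<in>set Q. chi S (\<lambda>k. u k * v k) = 1" "u i * v i = -1"
proof -
  from assms obtain u v where u: "u \<in> cube n" and v: "v \<in> cube n"
    and a: "\<forall>S\<in>set Q. chi S u = chi S v" and d: "u i \<noteq> v i"
    unfolding fixed_by_def by blast
  have "\<forall>S\<in>set Q. chi S (\<lambda>k. u k * v k) = 1"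
    using a chi_sq[OF v] by (simp add: chi_mult)
  moreover have "u i * v i = -1" using cube_vals[OF u, of i] cube_vals[OF v, of i] d by auto
  ultimately show ?thesis using that u v a d cube_mult[OF u v] by blast
qed

lemma sum_zero:
  assumes "\<not> fixed_by n Q (\<lambda>x. x i)"
  shows "(\<Sum>y\<in>region n Q x1. real_of_int (y i)) = 0"
proof -
  obtain u v where u: "u \<in> cube n" and v: "v \<in> cube n" and "\<forall>S\<in>set Q. chi S u = chi S v"
    and "u i \<noteq> v i" and w: "(\<lambda>k. u k * v k) \<in> cube n" "\<forall>S\<in>set Q. chi S (\<lambda>k. u k * v k) = 1"
    "u i * v i = -1"
    by (rule flip[OF assms])
  define w where "w = (\<lambda>k. u k * v k)"
  have wc: "w \<in> cube n" and wQ: "\<forall>S\<in>set Q. chi S w = 1" and wi: "w i = -1"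
    using w by (auto simp: w_def)
  define f where "f = (\<lambda>y k. w k * y k)"
  let ?R = "region n Q x1"
  have fR: "f y \<in> ?R" if "y \<in> ?R" for y
    using that wc wQ cube_mult[OF wc] by (auto simp: region_def f_def chi_mult)
  have ff: "f (f y) = y" if "y \<in> cube n" for y
  proof
    fix k show "f (f y) k = y k" using cube_sq[OF wc, of k] by (simp add: f_def mult.assoc[symmetric])
  qed
  have inj: "inj_on f ?R"
  proof (rule inj_onI)
    fix a b assume a: "a \<in> ?R" and b: "b \<in> ?R" and e: "f a = f b"
    have "a = f (f a)" using ff a by (simp add: region_def)
    also have "\<dots> = f (f b)" using e by simp
    also have "\<dots> = b" using ff b by (simp add: region_def)
    finally show "a = b" .
  qed
  have img: "f ` ?R = ?R"
  proof
    show "f ` ?R \<subseteq> ?R" using fR by auto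
    show "?R \<subseteq> f ` ?R"
    proof
      fix y assume y: "y \<in> ?R"
      then have "y = f (f y)" using ff by (auto simp: region_def)
      then show "y \<in> f ` ?R" using fR[OF y] by blast
    qed
  qed
  have "(\<Sum>y\<in>?R. real_of_int (y i)) = (\<Sum>y\<in>f ` ?R. real_of_int (y i))" using img by simp
  also have "\<dots> = (\<Sum>y\<in>?R. real_of_int (f y i))" using sum.reindex[OF inj] by simp
  also have "\<dots> = - (\<Sum>y\<in>?R. real_of_int (y i))"
    by (simp add: f_def wi sum_negf)
  finally show ?thesis by simp
qed

lemma mean_lemma:
  assumes "x1 \<in> cube n"
  shows "(\<Sum>y\<in>region n Q x1. real_of_int (y i)) / real (card (region n Q x1))
     = (if fixed_by n Q (\<lambda>x. x i) then real_of_int (x1 i) else 0)"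
proof (cases "fixed_by n Q (\<lambda>x. x i)")
  case True
  let ?R = "region n Q x1"
  have x1R: "x1 \<in> ?R" using assms by (simp add: region_def)
  have "\<forall>y\<in>?R. y i = x1 i" using True x1R unfolding fixed_by_def region_def by auto
  then have "(\<Sum>y\<in>?R. real_of_int (y i)) = (\<Sum>y\<in>?R. real_of_int (x1 i))" by simp
  also have "\<dots> = real (card ?R) * real_of_int (x1 i)" by simp
  moreover have "card ?R > 0" using x1R finite_region[of n Q x1] card_gt_0_iff by blast
  ultimately show ?thesis using True by simp
next
  case False
  then show ?thesis using sum_zero[OF False] by simp
qed

lemma alg:
  fixes a b m1 m2 m :: real
  assumes "a \<ge> 0" "b \<ge> 0" "a + b > 0" "a*m1 + b*m2 = (a+b)*m" "\<bar>m1 - m2\<bar> \<le> 2"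
  shows "a*m1^2 + b*m2^2 \<le> (a+b)*(m^2+1)"
proof -
  have e: "(a+b)*(a*m1^2+b*m2^2) = (a*m1+b*m2)^2 + a*b*(m1-m2)^2"
    by (simp add: power2_eq_square algebra_simps)
  have "(m1-m2)^2 = \<bar>m1-m2\<bar>^2" by simp
  also have "\<dots> \<le> 2^2" using assms(5) by (intro power_mono) auto
  finally have sq: "(m1-m2)^2 \<le> 4" by simp
  have ab: "a*b \<ge> 0" using assms by simp
  have "a*b*(m1-m2)^2 \<le> a*b*4" using mult_left_mono[OF sq ab] .
  also have "\<dots> \<le> (a+b)^2" using sum_squares_ge_zero[of "a-b" 0]
    by (simp add: power2_eq_square algebra_simps)
  finally have t: "a*b*(m1-m2)^2 \<le> (a+b)^2" .
  have "(a+b)*(a*m1^2+b*m2^2) \<le> ((a+b)*m)^2 + (a+b)^2" using e t assms(4) by simp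
  also have "\<dots> = (a+b)*((a+b)*(m^2+1))" by (simp add: power2_eq_square algebra_simps)
  finally show ?thesis using assms(3) by simp
qed

lemma flipS:
  assumes "fixed_by n (Q@[S]) (\<lambda>x. x i)" "\<not> fixed_by n Q (\<lambda>x. x i)"
  obtains w where "w \<in> cube n" "\<forall>T\<in>set Q. chi T w = 1" "chi S w = -1" "w i = -1"
proof -
  obtain u v where u: "u \<in> cube n" and v: "v \<in> cube n" and a: "\<forall>S\<in>set Q. chi S u = chi S v"
    and d: "u i \<noteq> v i" and w: "(\<lambda>k. u k * v k) \<in> cube n"
    "\<forall>S\<in>set Q. chi S (\<lambda>k. u k * v k) = 1" "u i * v i = -1"
    by (rule flip[OF assms(2)])
  have "chi S u \<noteq> chi S v"
  proof
    assume "chi S u = chi S v"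
    then have "\<forall>T\<in>set (Q@[S]). chi T u = chi T v" using a by auto
    then have "u i = v i" using assms(1) u v unfolding fixed_by_def by blast
    then show False using d by simp
  qed
  then have "chi S (\<lambda>k. u k * v k) = -1"
    using chi_vals[OF u, of S] chi_vals[OF v, of S] by (auto simp: chi_mult)
  then show ?thesis using that w by blast
qed

lemma flip_use:
  assumes w: "w \<in> cube n" "\<forall>T\<in>set Q. chi T w = 1" "chi S w = -1" "w i = -1"
    and fx: "fixed_by n (Q@[S]) (\<lambda>x. x i)"
    and y: "y \<in> cube n" and z: "z \<in> cube n" and a: "\<forall>T\<in>set Q. chi T y = chi T z"
    and d: "chi S y \<noteq> chi S z"
  shows "y i = - z i"
proof -
  define z' where "z' = (\<lambda>k. w k * z k)"
  have z'c: "z' \<in> cube n" using cube_mult[OF w(1) z] by (simp add: z'_def)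
  have "chi S z' = - chi S z" using w(3) by (simp add: z'_def chi_mult)
  also have "\<dots> = chi S y" using d chi_vals[OF y, of S] chi_vals[OF z, of S] by auto
  finally have "\<forall>T\<in>set (Q@[S]). chi T y = chi T z'"
    using a w(2) by (auto simp: z'_def chi_mult)
  then have "y i = z' i" using fx y z'c unfolding fixed_by_def by blast
  then show ?thesis using w(4) by (simp add: z'_def)
qed

lemma pair_fixed:
  assumes fi: "fixed_by n (Q@[S]) (\<lambda>x. x i)" "\<not> fixed_by n Q (\<lambda>x. x i)"
    and fj: "fixed_by n (Q@[S]) (\<lambda>x. x j)" "\<not> fixed_by n Q (\<lambda>x. x j)"
  shows "fixed_by n Q (\<lambda>x. x i * x j)"
proof -
  obtain wi where wi: "wi \<in> cube n" "\<forall>T\<in>set Q. chi T wi = 1" "chi S wi = -1" "wi i = -1"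
    by (rule flipS[OF fi])
  obtain wj where wj: "wj \<in> cube n" "\<forall>T\<in>set Q. chi T wj = 1" "chi S wj = -1" "wj j = -1"
    by (rule flipS[OF fj])
  show ?thesis unfolding fixed_by_def
  proof (intro ballI impI)
    fix y z assume y: "y \<in> cube n" and z: "z \<in> cube n" and a: "\<forall>T\<in>set Q. chi T y = chi T z"
    show "y i * y j = z i * z j"
    proof (cases "chi S y = chi S z")
      case True
      then have "\<forall>T\<in>set (Q@[S]). chi T y = chi T z" using a by auto
      then have "y i = z i" "y j = z j" using fi(1) fj(1) y z unfolding fixed_by_def by blast+
      then show ?thesis by simp
    next
      case False
      have "y i = - z i" by (rule flip_use[OF wi fi(1) y z a False])
      moreover have "y j = - z j" by (rule flip_use[OF wj fj(1) y z a False])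
      ultimately show ?thesis by simp
    qed
  qed
qed

definition mvec :: "nat \<Rightarrow> (nat \<Rightarrow> int) set \<Rightarrow> real" where
  "mvec n A = (\<Sum>i<n. (\<Sum>y\<in>A. real_of_int (y i)) / real (card A))"

definition cfc :: "nat \<Rightarrow> nat set list \<Rightarrow> bool" where
  "cfc n Q = (\<forall>i<n. \<forall>j<n. i \<noteq> j \<longrightarrow>
      fixed_by n Q (\<lambda>x. x i * x j) \<longrightarrow>
      (fixed_by n Q (\<lambda>x. x i) \<and> fixed_by n Q (\<lambda>x. x j)))"

lemma s_mvec: "finite A \<Longrightarrow> (\<Sum>i<n. \<Sum>y\<in>A. real_of_int (y i)) = real (card A) * mvec n A"
proof (cases "A = {}")
  case True then show ?thesis by (simp add: mvec_def)
next
  case False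
  assume f: "finite A"
  then have "real (card A) \<noteq> 0" using False by simp
  then show ?thesis unfolding mvec_def sum_divide_distrib[symmetric] by simp
qed

lemma mvec_region: assumes "x \<in> cube n" shows
   "mvec n (region n Q x) = (\<Sum>i<n. if fixed_by n Q (\<lambda>x. x i) then real_of_int (x i) else 0)"
proof -
  have "\<And>i. (\<Sum>y\<in>region n Q x. real_of_int (y i)) / real (card (region n Q x))
     = (if fixed_by n Q (\<lambda>x. x i) then real_of_int (x i) else 0)"
    by (rule mean_lemma[OF assms])
  then show ?thesis by (simp add: mvec_def)
qed


lemma diff_bound:
  assumes cf: "cfc n Q" and x1: "x1 \<in> region n Q x0" and x2: "x2 \<in> region n Q x0"
  shows "\<bar>mvec n (region n (Q@[S]) x1) - mvec n (region n (Q@[S]) x2)\<bar> \<le> 2"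
proof -
  have c1: "x1 \<in> cube n" and c2: "x2 \<in> cube n" using x1 x2 by (auto simp: region_def)
  have agree: "\<forall>T\<in>set Q. chi T x1 = chi T x2" using x1 x2 by (auto simp: region_def)
  define F where "F = {i\<in>{..<n}. fixed_by n (Q@[S]) (\<lambda>x. x i) \<and> \<not> fixed_by n Q (\<lambda>x. x i)}"
  define g where "g = (\<lambda>i. if fixed_by n (Q@[S]) (\<lambda>x. x i) then real_of_int (x1 i) - real_of_int (x2 i) else 0)"
  have "mvec n (region n (Q@[S]) x1) - mvec n (region n (Q@[S]) x2) = (\<Sum>i<n. g i)"
  proof -
    have "\<And>i. (if fixed_by n (Q@[S]) (\<lambda>x. x i) then real_of_int (x1 i) else 0)
       - (if fixed_by n (Q@[S]) (\<lambda>x. x i) then real_of_int (x2 i) else 0) = g i"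
      by (simp add: g_def)
    then show ?thesis unfolding mvec_region[OF c1] mvec_region[OF c2] sum_subtractf[symmetric] by simp
  qed
  also have "\<dots> = (\<Sum>i\<in>F. g i)"
  proof (rule sum.mono_neutral_right)
    show "finite {..<n}" by simp
    show "F \<subseteq> {..<n}" by (auto simp: F_def)
    show "\<forall>i\<in>{..<n} - F. g i = 0"
    proof
      fix i assume i: "i \<in> {..<n} - F"
      show "g i = 0"
      proof (cases "fixed_by n (Q@[S]) (\<lambda>x. x i)")
        case True
        then have "fixed_by n Q (\<lambda>x. x i)" using i by (auto simp: F_def)
        then have "x1 i = x2 i" using c1 c2 agree unfolding fixed_by_def by blast
        then show ?thesis by (simp add: g_def)
      qed (simp add: g_def)
    qed
  qed
  finally have eq: "mvec n (region n (Q@[S]) x1) - mvec n (region n (Q@[S]) x2) = (\<Sum>i\<in>F. g i)" .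
  have card: "card F \<le> 1"
  proof -
    have memF: "i < n \<and> fixed_by n (Q@[S]) (\<lambda>x. x i) \<and> \<not> fixed_by n Q (\<lambda>x. x i)" if "i \<in> F" for i
      using that by (simp add: F_def)
    have "\<forall>a\<in>F. \<forall>b\<in>F. a = b"
    proof (intro ballI)
      fix a b assume a: "a \<in> F" and b: "b \<in> F"
      show "a = b"
      proof (rule ccontr)
        assume ne: "a \<noteq> b"
        have ma: "a < n" "fixed_by n (Q@[S]) (\<lambda>x. x a)" "\<not> fixed_by n Q (\<lambda>x. x a)"
          using memF[OF a] by auto
        have mb: "b < n" "fixed_by n (Q@[S]) (\<lambda>x. x b)" "\<not> fixed_by n Q (\<lambda>x. x b)"
          using memF[OF b] by auto
        have "fixed_by n Q (\<lambda>x. x a * x b)"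
          by (rule pair_fixed[OF ma(2) ma(3) mb(2) mb(3)])
        then have "fixed_by n Q (\<lambda>x. x a) \<and> fixed_by n Q (\<lambda>x. x b)"
          using cf[unfolded cfc_def, rule_format, OF ma(1) mb(1) ne] by blast
        then show False using ma(3) by blast
      qed
    qed
    moreover have "finite F" by (simp add: F_def)
    ultimately show ?thesis using card_le_Suc0_iff_eq[of F] by simp
  qed
  have gb: "\<bar>g i\<bar> \<le> 2" for i
  proof -
    have "x1 i \<in> {-1,1}" "x2 i \<in> {-1,1}" using cube_vals[OF c1, of i] cube_vals[OF c2, of i] by auto
    then have "\<bar>real_of_int (x1 i) - real_of_int (x2 i)\<bar> \<le> 2" by auto
    then show ?thesis by (simp add: g_def)
  qed
  have "\<bar>\<Sum>i\<in>F. g i\<bar> \<le> (\<Sum>i\<in>F. \<bar>g i\<bar>)" by (rule sum_abs)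
  also have "\<dots> \<le> real (card F) * 2" using sum_bounded_above[of F "\<lambda>i. \<bar>g i\<bar>" 2] gb by simp
  also have "\<dots> \<le> 2" using card by simp
  finally show ?thesis using eq by simp
qed

definition H :: "nat \<Rightarrow> (nat \<Rightarrow> int) set \<Rightarrow> ptree \<Rightarrow> real" where
  "H n B t = (\<Sum>x\<in>B. (mvec n {y\<in>B. same_leaf t x y})^2)"

lemma s_split:
  assumes "finite A"
  shows "(\<Sum>i<n. \<Sum>y\<in>A. real_of_int (y i)) =
    (\<Sum>i<n. \<Sum>y\<in>{y\<in>A. P y}. real_of_int (y i)) + (\<Sum>i<n. \<Sum>y\<in>{y\<in>A. \<not> P y}. real_of_int (y i))"
proof -
  have "\<And>i. (\<Sum>y\<in>A. real_of_int (y i)) = (\<Sum>y\<in>{y\<in>A. P y}. real_of_int (y i)) + (\<Sum>y\<in>{y\<in>A. \<not> P y}. real_of_int (y i))"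
  proof -
    fix i
    have "A = {y\<in>A. P y} \<union> {y\<in>A. \<not> P y}" by auto
    then have "(\<Sum>y\<in>A. real_of_int (y i)) = (\<Sum>y\<in>{y\<in>A. P y} \<union> {y\<in>A. \<not> P y}. real_of_int (y i))" by simp
    also have "\<dots> = (\<Sum>y\<in>{y\<in>A. P y}. real_of_int (y i)) + (\<Sum>y\<in>{y\<in>A. \<not> P y}. real_of_int (y i))"
      by (rule sum.union_disjoint) (use assms in auto)
    finally show "(\<Sum>y\<in>A. real_of_int (y i)) = (\<Sum>y\<in>{y\<in>A. P y}. real_of_int (y i)) + (\<Sum>y\<in>{y\<in>A. \<not> P y}. real_of_int (y i))" .
  qed
  then show ?thesis by (simp add: sum.distrib)
qed

lemma main:
  "x0 \<in> cube n \<Longrightarrow> \<forall>P\<in>qpaths T. cfc n (Q@P) \<Longrightarrow>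
   H n (region n Q x0) T \<le> real (card (region n Q x0)) * ((mvec n (region n Q x0))^2 + real (depth T))"
proof (induction T arbitrary: Q x0)
  case Leaf
  then show ?case by (simp add: H_def)
next
  case (Node S l r)
  define A where "A = region n Q x0"
  define Am where "Am = {y\<in>A. chi S y = -1}"
  define Ap where "Ap = {y\<in>A. \<not> chi S y = -1}"
  define D where "D = real (max (depth l) (depth r))"
  have finA: "finite A" by (simp add: A_def finite_region)
  have finm: "finite Am" "finite Ap" using finA by (auto simp: Am_def Ap_def)
  have "[] \<in> qpaths (Node S l r)" by simp
  then have "cfc n (Q@[])" using Node.prems(2) by blast
  then have cfQ: "cfc n Q" by simp
  have cfl: "\<forall>P\<in>qpaths l. cfc n ((Q@[S])@P)" using Node.prems(2) by auto
  have cfr: "\<forall>P\<in>qpaths r. cfc n ((Q@[S])@P)" using Node.prems(2) by auto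
  have AmR: "Am = region n (Q@[S]) x1" if x1: "x1 \<in> Am" for x1
    using x1 unfolding Am_def A_def region_def by auto
  have ApR: "Ap = region n (Q@[S]) x2" if x2: "x2 \<in> Ap" for x2
  proof -
    have x2c: "x2 \<in> cube n" using x2 by (simp add: Ap_def A_def region_def)
    have "chi S x2 = 1" using x2 chi_vals[OF x2c, of S] by (simp add: Ap_def)
    moreover have "\<And>y. y \<in> cube n \<Longrightarrow> (chi S y \<noteq> -1) = (chi S y = 1)"
    proof -
      fix y :: "nat \<Rightarrow> int" assume "y \<in> cube n"
      from chi_vals[OF this, of S] show "(chi S y \<noteq> -1) = (chi S y = 1)" by auto
    qed
    ultimately show ?thesis using x2 unfolding Ap_def A_def region_def by auto
  qed
  have Am_cube: "Am \<subseteq> cube n" "Ap \<subseteq> cube n" by (auto simp: Am_def Ap_def A_def region_def)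
  have split: "H n A (Node S l r) = H n Am l + H n Ap r"
  proof -
    have eqm: "{y\<in>A. same_leaf (Node S l r) x y} = {y\<in>Am. same_leaf l x y}" if x: "x \<in> Am" for x
      using x by (auto simp: Am_def)
    have eqp: "{y\<in>A. same_leaf (Node S l r) x y} = {y\<in>Ap. same_leaf r x y}" if x: "x \<in> Ap" for x
    proof -
      have xc: "x \<in> cube n" using x Am_cube by auto
      have "chi S x = 1" using x chi_vals[OF xc, of S] by (simp add: Ap_def)
      moreover have "\<And>y. y \<in> A \<Longrightarrow> (chi S y \<noteq> -1) = (chi S y = 1)"
      proof -
        fix y :: "nat \<Rightarrow> int" assume "y \<in> A"
        then have "y \<in> cube n" by (simp add: A_def region_def)
        from chi_vals[OF this, of S] show "(chi S y \<noteq> -1) = (chi S y = 1)" by auto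
      qed
      ultimately show ?thesis using x unfolding Ap_def by auto
    qed
    define \<phi> where "\<phi> = (\<lambda>x. (mvec n {y\<in>A. same_leaf (Node S l r) x y})^2)"
    have AU: "A = Am \<union> Ap" by (auto simp: Am_def Ap_def)
    have dj: "Am \<inter> Ap = {}" by (auto simp: Am_def Ap_def)
    have "H n A (Node S l r) = sum \<phi> A" by (simp only: H_def \<phi>_def)
    also have "\<dots> = sum \<phi> (Am \<union> Ap)" by (simp only: AU[symmetric])
    also have "\<dots> = sum \<phi> Am + sum \<phi> Ap" by (rule sum.union_disjoint[OF finm(1) finm(2) dj])
    also have "sum \<phi> Am = H n Am l"
      unfolding H_def by (rule sum.cong[OF refl]) (simp only: \<phi>_def eqm)
    also have "sum \<phi> Ap = H n Ap r"
      unfolding H_def by (rule sum.cong[OF refl]) (simp only: \<phi>_def eqp)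
    finally show ?thesis .
  qed
  have hm: "H n Am l \<le> real (card Am) * ((mvec n Am)^2 + D)"
  proof (cases "Am = {}")
    case True then show ?thesis by (simp add: H_def)
  next
    case False
    then obtain x1 where x1: "x1 \<in> Am" by blast
    have "H n Am l \<le> real (card Am) * ((mvec n Am)^2 + real (depth l))"
      using Node.IH(1)[of x1 "Q@[S]"] x1 Am_cube cfl AmR[OF x1] by auto
    also have "\<dots> \<le> real (card Am) * ((mvec n Am)^2 + D)"
      by (intro mult_left_mono) (auto simp: D_def)
    finally show ?thesis .
  qed
  have hp: "H n Ap r \<le> real (card Ap) * ((mvec n Ap)^2 + D)"
  proof (cases "Ap = {}")
    case True then show ?thesis by (simp add: H_def)
  next
    case False
    then obtain x2 where x2: "x2 \<in> Ap" by blast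
    have "H n Ap r \<le> real (card Ap) * ((mvec n Ap)^2 + real (depth r))"
      using Node.IH(2)[of x2 "Q@[S]"] x2 Am_cube cfr ApR[OF x2] by auto
    also have "\<dots> \<le> real (card Ap) * ((mvec n Ap)^2 + D)"
      by (intro mult_left_mono) (auto simp: D_def)
    finally show ?thesis .
  qed
  have cA: "card A = card Am + card Ap"
  proof -
    have "A = Am \<union> Ap" by (auto simp: Am_def Ap_def)
    then show ?thesis using finm card_Un_disjoint[of Am Ap] by (auto simp: Am_def Ap_def)
  qed
  have sums: "real (card Am) * mvec n Am + real (card Ap) * mvec n Ap = real (card A) * mvec n A"
    using s_split[OF finA, of n "\<lambda>y. chi S y = -1"] s_mvec[OF finA, of n] s_mvec[OF finm(1), of n]
      s_mvec[OF finm(2), of n] unfolding Am_def Ap_def by simp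
  have key: "real (card Am) * (mvec n Am)^2 + real (card Ap) * (mvec n Ap)^2
      \<le> real (card A) * ((mvec n A)^2 + 1)"
  proof (cases "Am = {} \<or> Ap = {}")
    case True
    have triv: "real (card A) * (mvec n A)^2 \<le> real (card A) * ((mvec n A)^2 + 1)"
      by (rule mult_left_mono) simp_all
    from True show ?thesis
    proof
      assume e: "Am = {}"
      have "Ap = A"
      proof
        show "Ap \<subseteq> A" unfolding Ap_def by blast
        show "A \<subseteq> Ap" using e unfolding Am_def Ap_def by blast
      qed
      then show ?thesis using e triv by simp
    next
      assume e: "Ap = {}"
      have "Am = A"
      proof
        show "Am \<subseteq> A" unfolding Am_def by blast
        show "A \<subseteq> Am" using e unfolding Am_def Ap_def by blast
      qed
      then show ?thesis using e triv by simp
    qed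
  next
    case False
    then obtain x1 x2 where x1: "x1 \<in> Am" and x2: "x2 \<in> Ap" by blast
    have x1A: "x1 \<in> region n Q x0" using x1 unfolding Am_def A_def by blast
    have x2A: "x2 \<in> region n Q x0" using x2 unfolding Ap_def A_def by blast
    have dif: "\<bar>mvec n Am - mvec n Ap\<bar> \<le> 2"
      unfolding AmR[OF x1] ApR[OF x2] by (rule diff_bound[OF cfQ x1A x2A])
    have "card Am > 0" using x1 finm(1) card_gt_0_iff by blast
    then have pos: "real (card Am) + real (card Ap) > 0" by simp
    have cAr: "real (card A) = real (card Am) + real (card Ap)" using cA by simp
    have sums': "real (card Am) * mvec n Am + real (card Ap) * mvec n Ap = (real (card Am) + real (card Ap)) * mvec n A"
      using sums cAr by simp
    have "real (card Am) * (mvec n Am)^2 + real (card Ap) * (mvec n Ap)^2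
      \<le> (real (card Am) + real (card Ap)) * ((mvec n A)^2 + 1)"
      by (rule alg[OF _ _ pos sums' dif]) simp_all
    then show ?thesis using cAr by simp
  qed
  have "H n A (Node S l r) \<le> real (card Am) * ((mvec n Am)^2 + D) + real (card Ap) * ((mvec n Ap)^2 + D)"
    using split hm hp by simp
  also have "\<dots> = real (card Am) * (mvec n Am)^2 + real (card Ap) * (mvec n Ap)^2 + real (card A) * D"
    using cA by (simp add: algebra_simps)
  also have "\<dots> \<le> real (card A) * ((mvec n A)^2 + 1) + real (card A) * D" using key by simp
  also have "\<dots> = real (card A) * ((mvec n A)^2 + real (depth (Node S l r)))"
    by (simp add: D_def algebra_simps)
  finally show ?case by (simp add: A_def)
qed

theorem proposition1:
  fixes n :: nat and T :: ptree
  assumes "labels_in n T"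
    and "correlation_free n T"
  shows "(\<Sum>x\<in>cube n. (\<Sum>i<n. leaf_vec n T x i)\<^sup>2) / 2 ^ n \<le> real (depth T)"
proof -
  define x0 :: "nat \<Rightarrow> int" where "x0 = (\<lambda>_. 1)"
  have x0c: "x0 \<in> cube n" by (simp add: x0_def cube_def)
  have reg: "region n [] x0 = cube n" by (simp add: region_def)
  have cf: "\<forall>P\<in>qpaths T. cfc n ([]@P)"
    using assms(2) unfolding correlation_free_def cfc_def by simp
  have nf: "\<not> fixed_by n [] (\<lambda>x. x i)" if i: "i < n" for i
  proof
    assume f: "fixed_by n [] (\<lambda>x. x i)"
    have "x0(i := -1) \<in> cube n" using i by (auto simp: x0_def cube_def)
    have "\<forall>x\<in>cube n. \<forall>y\<in>cube n. x i = y i" using f by (simp add: fixed_by_def)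
    then have "x0 i = (x0(i := -1)) i" using x0c \<open>x0(i := -1) \<in> cube n\<close> by blast
    then show False by (simp add: x0_def)
  qed
  have m0: "mvec n (cube n) = 0"
    using mvec_region[OF x0c, of "[]"] nf reg by simp
  have "(\<Sum>x\<in>cube n. (\<Sum>i<n. leaf_vec n T x i)\<^sup>2) = H n (cube n) T"
    unfolding H_def by (simp add: leaf_vec_def mvec_def Let_def)
  also have "\<dots> \<le> real (card (cube n)) * ((mvec n (cube n))^2 + real (depth T))"
    using main[OF x0c cf] reg by simp
  also have "\<dots> = 2 ^ n * real (depth T)" using cube_card[of n] m0 by simp
  finally show ?thesis by (simp add: divide_le_eq mult.commute)
qed

end
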